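(* Let $m,d\geq 1$ be integers and let $f:[0,4]\to\mathbb{R}$ be continuous on $[0,4]$ and $(2m-2)$ times differentiable on $(0,4)$ (differentiable on $(0,4)$ in any case), with $f^{(2m-2)}$ convex on $(0,4)$. Let $\omega_N=\{\mathbf{x}_1,\ldots,\mathbf{x}_N\}\subset S^d$ be an antipodal $m$-sharp configuration. Then the potential $$p_f(\mathbf{x},\omega_N)=\sum_{i=1}^N f(|\mathbf{x}-\mathbf{x}_i|^2),\qquad \mathbf{x}\in S^d,$$ attains its absolute maximum over $S^d$ at every point of $\omega_N$. If moreover $f^{(2m-2)}$ is strictly convex on $(0,4)$, then every point of $S^d$ at which $p_f(\cdot,\omega_N)$ attains its absolute maximum over $S^d$ belongs to $\omega_N$.
   Context: $S^d=\{\mathbf{x}\in\mathbb{R}^{d+1}:|\mathbf{x}|=1\}$, with $|\cdot|$ the Euclidean norm; $\sigma_d$ is the normalized (probability) surface area measure on $S^d$. A finite configuration $\omega_N=\{\mathbf{x}_1,\dots,\mathbf{x}_N\}\subset S^d$ is a spherical $n$-design if $\frac1N\sum_{i=1}^N p(\mathbf{x}_i)=\int_{S^d}p\,d\sigma_d$ for every polynomial $p$ on $\mathbb{R}^{d+1}$ of degree at most $n$. A configuration of $N$ distinct points $\omega_N\subset S^d$ is $m$-sharp if it is a spherical $(2m-1)$-design and exactly $m$ distinct values occur as dot products $\mathbf{x}\cdot\mathbf{y}$ of distinct points $\mathbf{x},\mathbf{y}\in\omega_N$. A configuration is antipodal if $-\mathbf{x}\in\omega_N$ whenever $\mathbf{x}\in\omega_N$.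 Here $f^{(0)}=f$. *)

theory Defs
  imports "HOL-Analysis.Analysis"
begin

definition monomial :: "('n::finite \<Rightarrow> nat) \<Rightarrow> real^'n \<Rightarrow> real" where
  "monomial \<alpha> x = (\<Prod>i\<in>UNIV. (x $ i) ^ (\<alpha> i))"

definition polys_upto :: "nat \<Rightarrow> (real^'n::finite \<Rightarrow> real) set" where
  "polys_upto n = {p. \<exists>A c. finite A \<and> (\<forall>\<alpha>\<in>A. (\<Sum>i\<in>UNIV. \<alpha> i) \<le> n) \<and>
        p = (\<lambda>x. \<Sum>\<alpha>\<in>A. c \<alpha> * monomial \<alpha> x)}"

(* Integral against the normalized surface measure sigma_d on the unit sphere,
   realised as the cone measure: int f dsigma = (1/|B|) int_B f(x/|x|) dx *)
definition sphere_avg :: "(real^'n::finite \<Rightarrow> real) \<Rightarrow> real" where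
  "sphere_avg f = integral (cball 0 1) (\<lambda>x. f (x /\<^sub>R norm x)) / measure lebesgue (cball (0::real^'n) 1)"

definition spherical_design :: "nat \<Rightarrow> (real^'n::finite) set \<Rightarrow> bool" where
  "spherical_design n \<omega> \<longleftrightarrow> finite \<omega> \<and> \<omega> \<noteq> {} \<and> \<omega> \<subseteq> sphere 0 1 \<and>
     (\<forall>p\<in>polys_upto n. (\<Sum>x\<in>\<omega>. p x) / real (card \<omega>) = sphere_avg p)"

definition sharp_config :: "nat \<Rightarrow> (real^'n::finite) set \<Rightarrow> bool" where
  "sharp_config m \<omega> \<longleftrightarrow> spherical_design (2*m - 1) \<omega> \<and>
     card {x \<bullet> y | x y. x \<in> \<omega> \<and> y \<in> \<omega> \<and> x \<noteq> y} = m"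

definition antipodal :: "(real^'n::finite) set \<Rightarrow> bool" where
  "antipodal \<omega> \<longleftrightarrow> (\<forall>x\<in>\<omega>. - x \<in> \<omega>)"

definition strict_convex_on :: "real set \<Rightarrow> (real \<Rightarrow> real) \<Rightarrow> bool" where
  "strict_convex_on S f \<longleftrightarrow> convex S \<and>
    (\<forall>x\<in>S. \<forall>y\<in>S. \<forall>u>0. \<forall>v>0. x \<noteq> y \<longrightarrow> u + v = 1 \<longrightarrow> f (u * x + v * y) < u * f x + v * f y)"

definition potential :: "(real \<Rightarrow> real) \<Rightarrow> (real^'n::finite) set \<Rightarrow> real^'n \<Rightarrow> real" where
  "potential f \<omega> x = (\<Sum>y\<in>\<omega>. f ((norm (x - y))^2))"

end

theory Submission
  imports Defs "HOL-Computational_Algebra.Polynomial"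
begin

lemma rolle_set:
  fixes F F' :: "real \<Rightarrow> real"
  assumes "finite Z" "Z \<noteq> {}" "\<forall>z\<in>Z. F z = 0"
    "continuous_on {Min Z..Max Z} F"
    "\<And>t. Min Z < t \<Longrightarrow> t < Max Z \<Longrightarrow> (F has_real_derivative F' t) (at t)"
  shows "\<exists>B. finite B \<and> card B = card Z - 1 \<and> B \<subseteq> {Min Z<..<Max Z} \<and> B \<inter> Z = {} \<and> (\<forall>b\<in>B. F' b = 0)"
  using assms
proof (induction "card Z" arbitrary: Z rule: less_induct)
  case less
  show ?case
  proof (cases "card Z = 1")
    case True then show ?thesis by (intro exI[of _ "{}"]) auto
  next
    case False
    define z where "z = Max Z"
    define Z' where "Z' = Z - {z}"
    have zZ: "z \<in> Z" using less.prems z_def by simp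
    have c0: "card Z \<noteq> 0" using less.prems by simp
    have fin': "finite Z'" using less.prems Z'_def by simp
    have cardZ': "card Z' = card Z - 1" using zZ less.prems Z'_def by simp
    have Z'ne: "Z' \<noteq> {}" using cardZ' False c0 fin' by (metis One_nat_def card.empty diff_Suc_1 not0_implies_Suc)
    have sub: "Z' \<subseteq> Z" using Z'_def by auto
    have MaxZ'in: "Max Z' \<in> Z'" using fin' Z'ne by simp
    have MaxZ'lt: "Max Z' < z"
    proof -
      have "Max Z' \<le> Max Z" using Max_mono[OF sub Z'ne] less.prems by simp
      moreover have "Max Z' \<noteq> z" using MaxZ'in Z'_def by auto
      ultimately show ?thesis using z_def by simp
    qed
    have MinZ: "Min Z \<le> Min Z'" using Min_antimono[OF sub Z'ne] less.prems by simp
    have MinMax': "Min Z' \<le> Max Z'" using fin' Z'ne by simp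
    have IH: "\<exists>B. finite B \<and> card B = card Z' - 1 \<and> B \<subseteq> {Min Z'<..<Max Z'} \<and> B \<inter> Z' = {} \<and> (\<forall>b\<in>B. F' b = 0)"
    proof (rule less.hyps)
      show "card Z' < card Z" using cardZ' c0 by simp
      show "finite Z'" "Z' \<noteq> {}" by fact+
      show "\<forall>z\<in>Z'. F z = 0" using less.prems sub by auto
      show "continuous_on {Min Z'..Max Z'} F"
        by (rule continuous_on_subset[OF less.prems(4)]) (use MinZ MaxZ'lt z_def in auto)
      show "(F has_real_derivative F' t) (at t)" if "Min Z' < t" "t < Max Z'" for t
        using less.prems(5) that MinZ MaxZ'lt z_def by simp
    qed
    then obtain B' where B': "finite B'" "card B' = card Z' - 1" "B' \<subseteq> {Min Z'<..<Max Z'}" "B' \<inter> Z' = {}" "\<forall>b\<in>B'. F' b = 0"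
      by blast
    have "\<exists>r>Max Z'. r < z \<and> (F has_real_derivative 0) (at r)"
    proof (rule Rolle[OF MaxZ'lt])
      show "F (Max Z') = F z" using less.prems MaxZ'in sub zZ by auto
      show "continuous_on {Max Z'..z} F"
        by (rule continuous_on_subset[OF less.prems(4)]) (use MinZ MinMax' z_def in auto)
      show "F differentiable at x" if "Max Z' < x" "x < z" for x
        using less.prems(5)[of x] that MinZ MinMax' z_def by (auto simp: real_differentiable_def)
    qed
    then obtain r where r: "Max Z' < r" "r < z" "(F has_real_derivative 0) (at r)" by blast
    have "F' r = 0"
      using DERIV_unique[OF r(3) less.prems(5)[of r]] r MinZ MinMax' z_def by simp
    moreover have "r \<notin> B'" using B'(3) r by auto
    moreover have "r \<notin> Z"
    proof
      assume "r \<in> Z"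
      moreover have "r \<noteq> z" using r by simp
      ultimately have "r \<in> Z'" using Z'_def by simp
      then have "r \<le> Max Z'" using fin' by simp
      then show False using r by simp
    qed
    moreover have "z \<notin> B'" using B'(3) MaxZ'lt by auto
    ultimately have "card (insert r B') = card Z - 1"
    proof -
      have "card Z \<ge> 2" using c0 False by arith
      then show ?thesis using B'(1,2) cardZ' \<open>r \<notin> B'\<close> by simp
    qed
    moreover have "insert r B' \<subseteq> {Min Z<..<Max Z}"
      using B'(3) r MinZ MinMax' z_def by auto
    moreover have "insert r B' \<inter> Z = {}"
      using B'(4) \<open>r \<notin> Z\<close> \<open>z \<notin> B'\<close> Z'_def by auto
    ultimately show ?thesis
      using B'(1,5) \<open>F' r = 0\<close> by (intro exI[of _ "insert r B'"]) auto
  qed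
qed


definition lagr :: "real set \<Rightarrow> (real \<Rightarrow> real) \<Rightarrow> real poly" where
  "lagr S v = (\<Sum>a\<in>S. smult (v a / (\<Prod>b\<in>S-{a}. (a - b))) (\<Prod>b\<in>S-{a}. [:-b,1:]))"

definition pp :: "real set \<Rightarrow> real poly" where
  "pp S = (\<Prod>a\<in>S. [:-a,1:])"

lemma poly_pp: "poly (pp S) x = (\<Prod>a\<in>S. x - a)"
  by (simp add: pp_def poly_prod)

lemma poly_pp_zero: "finite S \<Longrightarrow> x \<in> S \<Longrightarrow> poly (pp S) x = 0"
  by (auto simp: poly_pp prod_zero_iff)

lemma lagr_eval:
  assumes "finite S" "x \<in> S"
  shows "poly (lagr S v) x = v x"
proof -
  have "poly (lagr S v) x = (\<Sum>a\<in>S. v a / (\<Prod>b\<in>S-{a}. (a - b)) * (\<Prod>b\<in>S-{a}. (x - b)))"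
    by (simp add: lagr_def poly_sum poly_prod)
  also have "\<dots> = v x / (\<Prod>b\<in>S-{x}. (x - b)) * (\<Prod>b\<in>S-{x}. (x - b))
       + (\<Sum>a\<in>S-{x}. v a / (\<Prod>b\<in>S-{a}. (a - b)) * (\<Prod>b\<in>S-{a}. (x - b)))"
    using assms by (simp add: sum.remove)
  also have "(\<Sum>a\<in>S-{x}. v a / (\<Prod>b\<in>S-{a}. (a - b)) * (\<Prod>b\<in>S-{a}. (x - b))) = 0"
    using assms by (intro sum.neutral) (auto simp: prod_zero_iff)
  also have "(\<Prod>b\<in>S-{x}. (x - b)) \<noteq> 0"
    using assms by (auto simp: prod_zero_iff)
  ultimately show ?thesis by simp
qed

lemma degree_lin_prod: "finite S \<Longrightarrow> degree (\<Prod>b\<in>S. [:-b,1::real:]) \<le> card S"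
proof -
  assume "finite S"
  then have "degree (\<Prod>b\<in>S. [:-b,1::real:]) \<le> sum (degree \<circ> (\<lambda>b. [:-b,1::real:])) S"
    by (rule degree_prod_sum_le)
  also have "\<dots> = card S" by simp
  finally show ?thesis .
qed

lemma lagr_degree:
  assumes "finite S"
  shows "degree (lagr S v) \<le> card S - 1"
  unfolding lagr_def
proof (rule degree_sum_le)
  fix a assume a: "a \<in> S"
  have "degree (smult (v a / (\<Prod>b\<in>S-{a}. (a - b))) (\<Prod>b\<in>S-{a}. [:-b,1:])) \<le> degree (\<Prod>b\<in>S-{a}. [:-b,1::real:])"
    by (rule degree_smult_le)
  also have "\<dots> \<le> card (S - {a})" using assms by (intro degree_lin_prod) simp
  also have "\<dots> = card S - 1" using assms a by simp
  finally show "degree (smult (v a / (\<Prod>b\<in>S-{a}. (a - b))) (\<Prod>b\<in>S-{a}. [:-b,1:])) \<le> card S - 1" .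
qed (use assms in simp)

lemma lagr_empty: "lagr {} v = 0" by (simp add: lagr_def)

lemma pp_remove: "finite S \<Longrightarrow> u \<in> S \<Longrightarrow> pp S = [:-u,1:] * pp (S - {u})"
  by (simp add: pp_def prod.remove)

lemma poly_pderiv_pp:
  assumes "finite S" "u \<in> S"
  shows "poly (pderiv (pp S)) u = (\<Prod>b\<in>S-{u}. (u - b))"
proof -
  have "pderiv (pp S) = [:-u,1:] * pderiv (pp (S - {u})) + pp (S - {u}) * pderiv [:-u,1:]"
    using pp_remove[OF assms] by (simp only: pderiv_mult)
  then show ?thesis by (simp add: poly_pp pderiv_pCons)
qed

lemma degree_pp: "finite S \<Longrightarrow> degree (pp S) = card S"
  unfolding pp_def by (subst degree_prod_eq_sum_degree) auto

lemma lead_coeff_pp: "lead_coeff (pp S) = 1"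
  unfolding pp_def by (simp add: lead_coeff_prod)

lemma pp_nz: "pp S \<noteq> 0"
  using lead_coeff_pp[of S] by auto

lemma pderiv_iter_add_smult:
  "(pderiv ^^ k) (p + smult c q) = (pderiv ^^ k) p + smult c ((pderiv ^^ k) q)"
  by (induction k) (auto simp: pderiv_add pderiv_smult)

lemma degree_pderiv_iter: "degree ((pderiv ^^ k) (p::real poly)) = degree p - k"
  by (induction k) (auto simp: degree_pderiv)

lemma lead_coeff_pderiv_iter:
  fixes p :: "real poly"
  assumes "k \<le> degree p" "lead_coeff p > 0"
  shows "lead_coeff ((pderiv ^^ k) p) > 0"
  using assms
proof (induction k)
  case 0 then show ?case by simp
next
  case (Suc k)
  let ?q = "(pderiv ^^ k) p"
  have dq: "degree ?q = degree p - k" by (rule degree_pderiv_iter)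
  have pos: "lead_coeff ?q > 0" using Suc by simp
  have "degree ?q \<ge> 1" using dq Suc.prems by simp
  then have "lead_coeff (pderiv ?q) = of_nat (degree ?q) * lead_coeff ?q"
    by (simp add: degree_pderiv coeff_pderiv)
  moreover have "of_nat (degree ?q) > (0::real)" using \<open>degree ?q \<ge> 1\<close> by simp
  ultimately show ?case using pos by simp
qed

lemma poly_deg1: "degree (p::real poly) \<le> 1 \<Longrightarrow> poly p t = coeff p 0 + coeff p 1 * t"
  by (subst poly_altdef) (auto simp: le_Suc_eq atMost_Suc coeff_eq_0)

lemma poly_deg2: "degree (p::real poly) = 2 \<Longrightarrow> poly p t = coeff p 0 + coeff p 1 * t + coeff p 2 * t^2"
  by (subst poly_altdef) (simp add: numeral_2_eq_2 atMost_Suc power2_eq_square algebra_simps)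


lemma strict_combo:
  fixes h :: "real \<Rightarrow> real"
  assumes cv: "convex_on {0<..<4} h" and c: "c \<ge> 0" and alt: "c > 0 \<or> strict_convex_on {0<..<4} h"
    and x: "x \<in> {0<..<4}" and y: "y \<in> {0<..<4}" and xy: "x \<noteq> y" and l: "0 < l" "l < 1"
  shows "h (l*x + (1-l)*y) + c*(l*x+(1-l)*y)^2 + b*(l*x+(1-l)*y) + a
         < l*(h x + c*x^2 + b*x + a) + (1-l)*(h y + c*y^2 + b*y + a)"
proof -
  have hq: "h (l*x + (1-l)*y) \<le> l * h x + (1-l) * h y"
    using convex_onD[OF cv, of "1-l" x y] x y l by simp
  have qid: "l*x^2 + (1-l)*y^2 - (l*x+(1-l)*y)^2 = l*(1-l)*(x-y)^2"
    by (simp add: power2_eq_square algebra_simps)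
  have qpos: "l*(1-l)*(x-y)^2 > 0" using xy l by simp
  have q: "c*(l*x+(1-l)*y)^2 \<le> l*(c*x^2) + (1-l)*(c*y^2)"
  proof -
    have "c*(l*x^2 + (1-l)*y^2 - (l*x+(1-l)*y)^2) \<ge> 0" using qid qpos c by simp
    then show ?thesis by (simp add: algebra_simps)
  qed
  show ?thesis
  proof (cases "c > 0")
    case True
    have "c*(l*x^2 + (1-l)*y^2 - (l*x+(1-l)*y)^2) > 0" using qid qpos True by simp
    then have "c*(l*x+(1-l)*y)^2 < l*(c*x^2) + (1-l)*(c*y^2)" by (simp add: algebra_simps)
    then show ?thesis using hq by (simp add: algebra_simps)
  next
    case False
    then have "strict_convex_on {0<..<4} h" using alt by simp
    then have "h (l*x + (1-l)*y) < l * h x + (1-l) * h y"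
      unfolding strict_convex_on_def using x y xy l by auto
    then show ?thesis using q by (simp add: algebra_simps)
  qed
qed

lemma three_contra:
  fixes \<phi> :: "real \<Rightarrow> real"
  assumes st: "\<And>x y l. x \<in> {0<..<4} \<Longrightarrow> y \<in> {0<..<4} \<Longrightarrow> x \<noteq> y \<Longrightarrow> 0 < l \<Longrightarrow> l < 1 \<Longrightarrow>
                 \<phi> (l*x + (1-l)*y) < l * \<phi> x + (1-l) * \<phi> y"
    and Z: "Z \<subseteq> {0<..<4}" "card Z = 3" "\<forall>z\<in>Z. \<phi> z = 0"
  shows False
proof -
  have ord: False if "a \<in> Z" "b \<in> Z" "c \<in> Z" "a < b" "b < c" for a b c
  proof -
    define l where "l = (c - b) / (c - a)"
    have l: "0 < l" "l < 1" using that by (auto simp: l_def field_simps)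
    have ca: "c - a \<noteq> 0" using that by simp
    have e1: "l*(c-a) = c-b" using ca by (simp add: l_def)
    have e2: "l*a + (1-l)*c = c - l*(c-a)" by (simp add: algebra_simps)
    have "l*a + (1-l)*c = b" using e1 e2 by simp
    then have "\<phi> b < l * \<phi> a + (1-l) * \<phi> c"
    proof -
      have "a \<in> {0<..<4}" "c \<in> {0<..<4}" using that Z(1) by auto
      then show ?thesis using st[of a c l] that l \<open>l*a + (1-l)*c = b\<close> by auto
    qed
    then show False using Z(3) that by simp
  qed
  obtain x y z where xyz: "Z = {x,y,z}" "x \<noteq> y" "y \<noteq> z" "x \<noteq> z"
    using Z(2) card_3_iff by metis
  then show False using ord[of x y z] ord[of x z y] ord[of y x z] ord[of y z x] ord[of z x y] ord[of z y x]
    by (metis insertCI linorder_neqE_linordered_idom)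
qed

lemma hermite_main:
  fixes f :: "real \<Rightarrow> real" and m :: nat and U :: "real set"
  assumes m1: "m \<ge> 1" and cont: "continuous_on {0..4} f"
    and d0: "\<forall>t\<in>{0<..<4}. f differentiable (at t)"
    and dj: "\<forall>j<2*m-2. \<forall>t\<in>{0<..<4}. ((deriv ^^ j) f) differentiable (at t)"
    and cv: "convex_on {0<..<4} ((deriv ^^ (2*m-2)) f)"
    and Uf: "finite U" and Us: "U \<subseteq> {0<..<4}" and Uc: "card U = m - 1"
  shows "\<exists>Q. degree Q \<le> 2*m-1 \<and> (\<forall>v\<in>insert 0 (insert 4 U). poly Q v = f v) \<and>
     (\<forall>s\<in>{0..4}. f s \<le> poly Q s) \<and>
     (strict_convex_on {0<..<4} ((deriv ^^ (2*m-2)) f) \<longrightarrow>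
        (\<forall>s\<in>{0..4} - insert 0 (insert 4 U). f s < poly Q s))"
proof -
  define V where "V = insert 0 (insert 4 U)"
  have Vf: "finite V" using Uf V_def by simp
  have nU: "0 \<notin> U" "4 \<notin> U" using Us by auto
  have Vc: "card V = m + 1" using Uc m1 nU Uf by (simp add: V_def)
  have Vs: "V \<subseteq> {0..4}" using Us V_def by auto
  define H0 where "H0 = lagr V f"
  define PV where "PV = pp V"
  define B where "B = lagr U (\<lambda>u. (deriv f u - poly (pderiv H0) u) / poly (pderiv PV) u)"
  define Q where "Q = H0 + PV * B"
  have PV0: "\<forall>v\<in>V. poly PV v = 0" using Vf by (simp add: PV_def poly_pp_zero)
  have QV: "\<forall>v\<in>V. poly Q v = f v"
    using PV0 Vf by (simp add: Q_def H0_def lagr_eval)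
  have PVd: "\<forall>u\<in>U. poly (pderiv PV) u \<noteq> 0"
  proof
    fix u assume "u \<in> U"
    then have "u \<in> V" by (simp add: V_def)
    then show "poly (pderiv PV) u \<noteq> 0"
      using Vf by (simp add: PV_def poly_pderiv_pp prod_zero_iff)
  qed
  have QD: "\<forall>u\<in>U. poly (pderiv Q) u = deriv f u"
  proof
    fix u assume u: "u \<in> U"
    then have uV: "u \<in> V" by (simp add: V_def)
    have "poly B u = (deriv f u - poly (pderiv H0) u) / poly (pderiv PV) u"
      using u Uf by (simp add: B_def lagr_eval)
    then show "poly (pderiv Q) u = deriv f u"
      using PV0 uV PVd u by (simp add: Q_def pderiv_add pderiv_mult)
  qed
  have Qdeg: "degree Q \<le> 2*m-1"
  proof -
    have "degree H0 \<le> 2*m-1" using lagr_degree[OF Vf, of f] Vc by (simp add: H0_def)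
    moreover have "degree (PV * B) \<le> 2*m-1"
    proof (cases "U = {}")
      case True then show ?thesis by (simp add: B_def lagr_empty)
    next
      case False
      then have "card U \<ge> 1" using Uf by (simp add: Suc_le_eq card_gt_0_iff)
      have "degree (PV * B) \<le> degree PV + degree B" by (rule degree_mult_le)
      also have "\<dots> \<le> (m + 1) + (card U - 1)"
        using degree_pp[OF Vf] Vc lagr_degree[OF Uf] by (simp add: PV_def B_def)
      also have "\<dots> = 2*m-1" using Uc \<open>card U \<ge> 1\<close> by simp
      finally show ?thesis .
    qed
    ultimately show ?thesis by (simp add: Q_def degree_add_le)
  qed
  have key: False if s: "s \<in> {0<..<4}" "s \<notin> U" and ge: "f s \<ge> poly Q s"
    and alt: "f s > poly Q s \<or> strict_convex_on {0<..<4} ((deriv ^^ (2*m-2)) f)" for s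
  proof -
    define W where "W = PV * pp U"
    define pU where "pU = (\<Prod>a\<in>U. s - a)"
    have pU0: "pU \<noteq> 0" using s Uf by (auto simp: pU_def prod_zero_iff)
    have "poly PV s = s * (s - 4) * pU"
      using nU Uf by (simp add: PV_def V_def poly_pp pU_def)
    then have Wseq: "poly W s = (s * (s - 4)) * (pU * pU)"
      by (simp add: W_def poly_pp pU_def)
    have "s * (s - 4) < 0" using s by (simp add: mult_pos_neg)
    moreover have "pU * pU > 0" using pU0 by (simp add: zero_less_mult_iff linorder_neq_iff) blast
    ultimately have Ws: "poly W s < 0" using Wseq by (simp add: mult_neg_pos)
    define K where "K = (f s - poly Q s) / poly W s"
    have K0: "K \<le> 0" using ge Ws by (simp add: K_def divide_nonneg_neg)
    have Kalt: "K < 0 \<or> strict_convex_on {0<..<4} ((deriv ^^ (2*m-2)) f)"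
      using alt Ws by (auto simp: K_def divide_pos_neg)
    define P where "P = Q + smult K W"
    define F where "F = (\<lambda>k t. (deriv ^^ k) f t - poly ((pderiv ^^ k) P) t)"
    have Fder: "(F k has_real_derivative F (Suc k) t) (at t)"
      if k: "k = 0 \<or> k < 2*m-2" and t: "t \<in> {0<..<4}" for k t
    proof -
      have "(deriv ^^ k) f differentiable (at t)" using d0 dj k t by (cases "k = 0") auto
      then have "((deriv ^^ k) f has_real_derivative deriv ((deriv^^k) f) t) (at t)"
        by (simp add: DERIV_deriv_iff_real_differentiable)
      then have "((\<lambda>t. (deriv ^^ k) f t - poly ((pderiv ^^ k) P) t) has_real_derivative
                 deriv ((deriv^^k) f) t - poly (pderiv ((pderiv ^^ k) P)) t) (at t)"
        by (rule DERIV_diff) (rule poly_DERIV)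
      then show ?thesis by (simp add: F_def)
    qed
    have Fcont: "continuous_on S (F k)" if "S \<subseteq> {0<..<4}" "k = 0 \<or> k < 2*m-2" for S k
    proof (intro continuous_at_imp_continuous_on ballI)
      fix x assume "x \<in> S"
      then have "(F k has_real_derivative F (Suc k) x) (at x)" using Fder[of k x] that by auto
      then show "isCont (F k) x" by (rule DERIV_isCont)
    qed
    have WV: "\<forall>v\<in>V. poly W v = 0" using PV0 by (simp add: W_def)
    have F0V: "\<forall>v\<in>V. F 0 v = 0" using QV WV by (simp add: F_def P_def)
    have F0s: "F 0 s = 0" using Ws by (simp add: F_def P_def K_def)
    have WD: "\<forall>u\<in>U. poly (pderiv W) u = 0"
      using PV0 Uf by (auto simp: W_def pderiv_mult poly_pp_zero V_def)
    have F1U: "\<forall>u\<in>U. F 1 u = 0"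
      using QD WD by (simp add: F_def P_def pderiv_add pderiv_smult)
    define Z0 where "Z0 = insert s V"
    have Z0f: "finite Z0" using Vf by (simp add: Z0_def)
    have sV: "s \<notin> V" using s by (auto simp: V_def)
    have Z0c: "card Z0 = m + 2" using sV Vf Vc by (simp add: Z0_def)
    have Z0s: "Z0 \<subseteq> {0..4}" using Vs s by (auto simp: Z0_def)
    have Min0: "Min Z0 = 0" using Z0s Z0f by (intro Min_eqI) (auto simp: Z0_def V_def)
    have Max0: "Max Z0 = 4" using Z0s Z0f by (intro Max_eqI) (auto simp: Z0_def V_def)
    have "\<exists>B. finite B \<and> card B = card Z0 - 1 \<and> B \<subseteq> {Min Z0<..<Max Z0} \<and> B \<inter> Z0 = {} \<and> (\<forall>b\<in>B. F 1 b = 0)"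
    proof (rule rolle_set[OF Z0f])
      show "Z0 \<noteq> {}" by (simp add: Z0_def)
      show "\<forall>z\<in>Z0. F 0 z = 0" using F0V F0s by (simp add: Z0_def)
      have "continuous_on {0..4} (\<lambda>t. f t - poly P t)"
        by (intro continuous_on_diff cont continuous_at_imp_continuous_on ballI DERIV_isCont[OF poly_DERIV])
      then show "continuous_on {Min Z0..Max Z0} (F 0)" using Min0 Max0 by (simp add: F_def)
      show "(F 0 has_real_derivative F 1 t) (at t)" if "Min Z0 < t" "t < Max Z0" for t
        using Fder[of 0 t] that Min0 Max0 by simp
    qed
    then obtain B1 where B1: "finite B1" "card B1 = m + 1" "B1 \<subseteq> {0<..<4}" "B1 \<inter> Z0 = {}" "\<forall>b\<in>B1. F 1 b = 0"
      using Z0c Min0 Max0 by auto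
    define Z1 where "Z1 = B1 \<union> U"
    have Z1f: "finite Z1" using B1 Uf by (simp add: Z1_def)
    have "B1 \<inter> U = {}" using B1(4) by (auto simp: Z0_def V_def)
    then have Z1c: "card Z1 = 2*m" using B1 Uf Uc m1 by (simp add: Z1_def card_Un_disjoint)
    have Z1s: "Z1 \<subseteq> {0<..<4}" using B1 Us by (simp add: Z1_def)
    have Z10: "\<forall>z\<in>Z1. F 1 z = 0" using B1 F1U by (auto simp: Z1_def)
    define k where "k = 2*m-2"
    have form: "\<exists>a b c. c \<ge> 0 \<and> (c > 0 \<or> strict_convex_on {0<..<4} ((deriv ^^ k) f)) \<and>
                  (\<forall>t. F k t = (deriv^^k) f t + c*t^2 + b*t + a)"
    proof -
      have Pk: "(pderiv ^^ k) P = (pderiv ^^ k) Q + smult K ((pderiv ^^ k) W)"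
        by (simp add: P_def pderiv_iter_add_smult)
      have dQ: "degree ((pderiv ^^ k) Q) \<le> 1" using Qdeg by (simp add: degree_pderiv_iter k_def)
      have dW: "degree W = 2*m"
        using degree_pp[OF Vf] degree_pp[OF Uf] Vc Uc m1 pp_nz
        by (simp add: W_def PV_def degree_mult_eq)
      have lW: "lead_coeff W = 1" by (simp add: W_def PV_def lead_coeff_mult lead_coeff_pp)
      have dWk: "degree ((pderiv ^^ k) W) = 2" using dW m1 by (simp add: degree_pderiv_iter k_def)
      have lWk: "lead_coeff ((pderiv ^^ k) W) > 0"
        using lead_coeff_pderiv_iter[of k W] dW lW by (simp add: k_def)
      define c2 where "c2 = coeff ((pderiv ^^ k) W) 2"
      have c2: "c2 > 0" using lWk dWk by (simp add: c2_def)
      have ev: "poly ((pderiv ^^ k) P) t =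
          (coeff ((pderiv ^^ k) Q) 0 + K * coeff ((pderiv ^^ k) W) 0)
          + (coeff ((pderiv ^^ k) Q) 1 + K * coeff ((pderiv ^^ k) W) 1) * t + K * c2 * t^2" for t
        using poly_deg1[OF dQ, of t] poly_deg2[OF dWk, of t]
        by (simp add: Pk c2_def algebra_simps)
      have Kc: "K*c2 \<le> 0" using K0 c2 by (simp add: mult_nonpos_nonneg)
      have Kc2: "K < 0 \<Longrightarrow> K*c2 < 0" using c2 by (simp add: mult_neg_pos)
      show ?thesis
        apply (rule exI[of _ "- (coeff ((pderiv ^^ k) Q) 0 + K * coeff ((pderiv ^^ k) W) 0)"])
        apply (rule exI[of _ "- (coeff ((pderiv ^^ k) Q) 1 + K * coeff ((pderiv ^^ k) W) 1)"])
        apply (rule exI[of _ "- K * c2"])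
        using Kc Kc2 Kalt ev by (auto simp: F_def k_def algebra_simps)
    qed
    then obtain a b c where abc: "c \<ge> 0" "c > 0 \<or> strict_convex_on {0<..<4} ((deriv ^^ k) f)"
      "\<forall>t. F k t = (deriv^^k) f t + c*t^2 + b*t + a" by blast
    have stF: "F k (l*x + (1-l)*y) < l * F k x + (1-l) * F k y"
      if "x \<in> {0<..<4}" "y \<in> {0<..<4}" "x \<noteq> y" "0 < l" "l < 1" for x y l
      using strict_combo[OF cv[folded k_def] abc(1) abc(2) that, of b a] abc(3) by simp
    show False
    proof (cases "m = 1")
      case True
      then have k0: "k = 0" by (simp add: k_def)
      have "U = {}" using Uc True Uf by simp
      then have "card B1 = 2" using B1 True by simp
      then obtain a1 b1 where ab: "B1 = {a1, b1}" "a1 \<noteq> b1" by (meson card_2_iff)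
      have a1: "a1 \<in> {0<..<4}" "F 1 a1 = 0" and b1: "b1 \<in> {0<..<4}" "F 1 b1 = 0" using B1 ab by auto
      have cvF: "convex_on {0<..<4} (F 0)"
      proof (rule convex_onI)
        fix t x y :: real assume t: "0 < t" "t < 1" and xy: "x \<in> {0<..<4}" "y \<in> {0<..<4}"
        show "F 0 ((1 - t) *\<^sub>R x + t *\<^sub>R y) \<le> (1 - t) * F 0 x + t * F 0 y"
        proof (cases "x = y")
          case True then show ?thesis by (simp add: algebra_simps)
        next
          case False
          have "F 0 ((1-t)*x + (1-(1-t))*y) < (1-t) * F 0 x + (1-(1-t)) * F 0 y"
            using stF[of x y "1-t"] k0 xy t False by simp
          then show ?thesis by simp
        qed
      qed simp
      have tang: "F 0 x - F 0 c0 \<ge> 0" if "c0 \<in> {0<..<4}" "F 1 c0 = 0" "x \<in> {0<..<4}" for c0 x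
      proof -
        have "F 1 c0 * (x - c0) \<le> F 0 x - F 0 c0"
        proof (rule convex_on_imp_above_tangent[OF cvF])
          show "connected {0<..<4::real}" by simp
          show "c0 \<in> interior {0<..<4}" using that by (simp add: interior_open)
          show "x \<in> {0<..<4}" by fact
          show "(F 0 has_real_derivative F 1 c0) (at c0 within {0<..<4})"
            using Fder[of 0 c0] that by (simp add: has_field_derivative_at_within)
        qed
        then show ?thesis using that by simp
      qed
      define mid where "mid = (1/2) * a1 + (1 - 1/2) * b1"
      have midin: "mid \<in> {0<..<4}" using a1 b1 by (auto simp: mid_def)
      have "F 0 mid < (1/2) * F 0 a1 + (1 - 1/2) * F 0 b1"
        using stF[of a1 b1 "1/2"] a1 b1 ab k0 by (simp add: mid_def)
      moreover have "F 0 b1 - F 0 a1 \<ge> 0" using tang a1 b1 by blast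
      moreover have "F 0 a1 - F 0 b1 \<ge> 0" using tang a1 b1 by blast
      moreover have "F 0 mid - F 0 a1 \<ge> 0" using tang a1 midin by blast
      ultimately show False by simp
    next
      case False
      then have m2: "m \<ge> 2" using m1 by simp
      have iter: "\<exists>Z. finite Z \<and> Z \<subseteq> {0<..<4} \<and> card Z = 2*m+1-j \<and> (\<forall>z\<in>Z. F j z = 0)"
        if "1 \<le> j" "j \<le> 2*m-2" for j
        using that
      proof (induction j)
        case 0 then show ?case by simp
      next
        case (Suc j)
        show ?case
        proof (cases "j = 0")
          case True then show ?thesis using Z1f Z1s Z1c Z10 by auto
        next
          case False
          then obtain Z where Z: "finite Z" "Z \<subseteq> {0<..<4}" "card Z = 2*m+1-j" "\<forall>z\<in>Z. F j z = 0"
            using Suc by auto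
          have jlt: "j < 2*m-2" using Suc.prems by simp
          have Zne: "Z \<noteq> {}" using Z(3) jlt by auto
          have MinZ: "Min Z \<in> Z" "Max Z \<in> Z" using Z(1) Zne by auto
          have sub: "{Min Z..Max Z} \<subseteq> {0<..<4}" using MinZ Z(2) by force
          have "\<exists>B. finite B \<and> card B = card Z - 1 \<and> B \<subseteq> {Min Z<..<Max Z} \<and> B \<inter> Z = {} \<and> (\<forall>b\<in>B. F (Suc j) b = 0)"
          proof (rule rolle_set[OF Z(1) Zne Z(4)])
            show "continuous_on {Min Z..Max Z} (F j)" using Fcont[OF sub] jlt by simp
            show "(F j has_real_derivative F (Suc j) t) (at t)" if "Min Z < t" "t < Max Z" for t
            proof -
              have "t \<in> {Min Z..Max Z}" using that by simp
              then have "t \<in> {0<..<4}" using sub by blast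
              then show ?thesis using Fder[of j t] jlt by simp
            qed
          qed
          then obtain B where "finite B" "card B = card Z - 1" "B \<subseteq> {Min Z<..<Max Z}" "\<forall>b\<in>B. F (Suc j) b = 0"
            by blast
          moreover have "{Min Z<..<Max Z} \<subseteq> {0<..<4}" using sub by auto
          ultimately show ?thesis using Z(3)
            by (intro exI[of _ B]) auto
        qed
      qed
      obtain Z where Z: "finite Z" "Z \<subseteq> {0<..<4}" "card Z = 3" "\<forall>z\<in>Z. F k z = 0"
      proof -
        have "1 \<le> k" "k \<le> 2*m-2" using m2 by (auto simp: k_def)
        moreover have "2*m+1-k = 3" using m2 by (simp add: k_def)
        ultimately show ?thesis using iter[of k] that by metis
      qed
      show False by (rule three_contra[OF stF Z(2,3,4)])
    qed
  qed
  show ?thesis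
  proof (intro exI[of _ Q] conjI)
    show "degree Q \<le> 2*m-1" by fact
    show "\<forall>v\<in>insert 0 (insert 4 U). poly Q v = f v" using QV by (simp add: V_def)
    show "\<forall>s\<in>{0..4}. f s \<le> poly Q s"
    proof
      fix s :: real assume s: "s \<in> {0..4}"
      show "f s \<le> poly Q s"
      proof (cases "s \<in> V")
        case True then show ?thesis using QV by simp
      next
        case False
        then have "s \<in> {0<..<4}" "s \<notin> U" using s by (auto simp: V_def)
        then show ?thesis using key[of s] by force
      qed
    qed
    show "strict_convex_on {0<..<4} ((deriv ^^ (2*m-2)) f) \<longrightarrow>
        (\<forall>s\<in>{0..4} - insert 0 (insert 4 U). f s < poly Q s)"
    proof (intro impI ballI)
      fix s assume sc: "strict_convex_on {0<..<4} ((deriv ^^ (2*m-2)) f)" and s: "s \<in> {0..4} - insert 0 (insert 4 U)"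
      then have "s \<in> {0<..<4}" "s \<notin> U" by auto
      then show "f s < poly Q s" using key[of s] sc by force
    qed
  qed
qed


definition Exps :: "nat \<Rightarrow> ('n::finite \<Rightarrow> nat) set" where
  "Exps n = {\<alpha>. (\<Sum>i\<in>UNIV. \<alpha> i) \<le> n}"

lemma finite_Exps: "finite (Exps n :: ('n::finite \<Rightarrow> nat) set)"
proof -
  have "Exps n \<subseteq> PiE (UNIV::'n set) (\<lambda>_. {..n})"
  proof
    fix \<alpha> :: "'n \<Rightarrow> nat" assume a: "\<alpha> \<in> Exps n"
    have "\<alpha> i \<le> n" for i
    proof -
      have "\<alpha> i \<le> (\<Sum>i\<in>UNIV. \<alpha> i)" by (rule member_le_sum) auto
      then show ?thesis using a by (simp add: Exps_def)
    qed
    then show "\<alpha> \<in> PiE UNIV (\<lambda>_. {..n})" by (simp add: PiE_UNIV_domain)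
  qed
  moreover have "finite (PiE (UNIV::'n set) (\<lambda>_. {..n}))" by (intro finite_PiE) auto
  ultimately show ?thesis by (rule finite_subset)
qed

lemma polys_iff:
  "p \<in> polys_upto n \<longleftrightarrow> (\<exists>c. p = (\<lambda>x. \<Sum>\<alpha>\<in>Exps n. c \<alpha> * monomial \<alpha> x))"
proof
  assume "p \<in> polys_upto n"
  then obtain A c where A: "finite A" "\<forall>\<alpha>\<in>A. (\<Sum>i\<in>UNIV. \<alpha> i) \<le> n" "p = (\<lambda>x. \<Sum>\<alpha>\<in>A. c \<alpha> * monomial \<alpha> x)"
    by (auto simp: polys_upto_def)
  have sub: "A \<subseteq> Exps n" using A by (auto simp: Exps_def)
  have "(\<Sum>\<alpha>\<in>Exps n. (if \<alpha> \<in> A then c \<alpha> else 0) * monomial \<alpha> x) = (\<Sum>\<alpha>\<in>A. c \<alpha> * monomial \<alpha> x)" for x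
  proof -
    have "(\<Sum>\<alpha>\<in>Exps n. (if \<alpha> \<in> A then c \<alpha> else 0) * monomial \<alpha> x)
        = (\<Sum>\<alpha>\<in>Exps n. if \<alpha> \<in> A then c \<alpha> * monomial \<alpha> x else 0)"
      by (intro sum.cong) auto
    also have "\<dots> = (\<Sum>\<alpha>\<in>Exps n \<inter> A. c \<alpha> * monomial \<alpha> x)"
      using sum.inter_restrict[OF finite_Exps, of "\<lambda>\<alpha>. c \<alpha> * monomial \<alpha> x" n A] by simp
    also have "Exps n \<inter> A = A" using sub by auto
    finally show ?thesis .
  qed
  then show "\<exists>c. p = (\<lambda>x. \<Sum>\<alpha>\<in>Exps n. c \<alpha> * monomial \<alpha> x)"
    using A(3) by (intro exI[of _ "\<lambda>\<alpha>. if \<alpha> \<in> A then c \<alpha> else 0"]) auto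
next
  assume "\<exists>c. p = (\<lambda>x. \<Sum>\<alpha>\<in>Exps n. c \<alpha> * monomial \<alpha> x)"
  then show "p \<in> polys_upto n" unfolding polys_upto_def using finite_Exps
    by (auto simp: Exps_def)
qed

lemma polys_add: "p \<in> polys_upto n \<Longrightarrow> q \<in> polys_upto n \<Longrightarrow> (\<lambda>x. p x + q x) \<in> polys_upto n"
proof -
  assume "p \<in> polys_upto n" "q \<in> polys_upto n"
  then obtain c d where "p = (\<lambda>x. \<Sum>\<alpha>\<in>Exps n. c \<alpha> * monomial \<alpha> x)" "q = (\<lambda>x. \<Sum>\<alpha>\<in>Exps n. d \<alpha> * monomial \<alpha> x)"
    by (auto simp: polys_iff)
  then show ?thesis unfolding polys_iff
    by (intro exI[of _ "\<lambda>\<alpha>. c \<alpha> + d \<alpha>"]) (simp add: sum.distrib algebra_simps)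
qed

lemma polys_zero: "(\<lambda>x. 0) \<in> polys_upto n"
  unfolding polys_iff by (intro exI[of _ "\<lambda>_. 0"]) simp

lemma polys_sum:
  assumes "finite I" "\<forall>i\<in>I. P i \<in> polys_upto n"
  shows "(\<lambda>x. \<Sum>i\<in>I. P i x) \<in> polys_upto n"
  using assms
proof (induction I rule: finite_induct)
  case empty then show ?case by (simp add: polys_zero)
next
  case (insert a I)
  then show ?case using polys_add[of "P a" n "\<lambda>x. \<Sum>i\<in>I. P i x"] by simp
qed

lemma polys_term: "(\<Sum>i\<in>UNIV. \<alpha> i) \<le> n \<Longrightarrow> (\<lambda>x. a * monomial \<alpha> x) \<in> polys_upto n"
  unfolding polys_upto_def by (intro CollectI exI[of _ "{\<alpha>}"] exI[of _ "\<lambda>_. a"]) auto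

lemma monomial_mult: "monomial \<alpha> x * monomial \<beta> x = monomial (\<lambda>i. \<alpha> i + \<beta> i) x"
  by (simp add: monomial_def power_add prod.distrib)

lemma polys_mul:
  fixes p q :: "real^'n::finite \<Rightarrow> real"
  assumes "p \<in> polys_upto a" "q \<in> polys_upto b"
  shows "(\<lambda>x. p x * q x) \<in> polys_upto (a + b)"
proof -
  obtain c d where cd: "p = (\<lambda>x. \<Sum>\<alpha>\<in>Exps a. c \<alpha> * monomial \<alpha> x)" "q = (\<lambda>x. \<Sum>\<alpha>\<in>Exps b. d \<alpha> * monomial \<alpha> x)"
    using assms by (auto simp: polys_iff)
  have eq: "p x * q x = (\<Sum>\<alpha>\<in>Exps a. \<Sum>\<beta>\<in>Exps b. (c \<alpha> * d \<beta>) * monomial (\<lambda>i. \<alpha> i + \<beta> i) x)" for x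
    unfolding cd sum_product by (intro sum.cong refl) (simp add: monomial_mult[symmetric] algebra_simps)
  have "(\<lambda>x. \<Sum>\<alpha>\<in>Exps a. \<Sum>\<beta>\<in>Exps b. (c \<alpha> * d \<beta>) * monomial (\<lambda>i. \<alpha> i + \<beta> i) x) \<in> polys_upto (a + b)"
  proof (intro polys_sum[OF finite_Exps] ballI)
    fix \<alpha> \<beta> :: "'n \<Rightarrow> nat" assume "\<alpha> \<in> Exps a" "\<beta> \<in> Exps b"
    then have "(\<Sum>i\<in>UNIV. \<alpha> i + \<beta> i) \<le> a + b" by (simp add: Exps_def sum.distrib)
    then show "(\<lambda>x. (c \<alpha> * d \<beta>) * monomial (\<lambda>i. \<alpha> i + \<beta> i) x) \<in> polys_upto (a + b)"
      by (rule polys_term)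
  qed
  then show ?thesis using eq by simp
qed

lemma polys_const: "(\<lambda>x. a) \<in> polys_upto n"
proof -
  have "(\<lambda>x. a * monomial (\<lambda>_. 0) x) \<in> polys_upto n" by (rule polys_term) simp
  then show ?thesis by (simp add: monomial_def)
qed

lemma polys_mono: "n \<le> n' \<Longrightarrow> p \<in> polys_upto n \<Longrightarrow> p \<in> polys_upto n'"
  unfolding polys_upto_def by fastforce

lemma polys_inner: "(\<lambda>y. x \<bullet> y) \<in> polys_upto 1"
proof -
  have coord: "(\<lambda>y. x $ i * monomial (\<lambda>j. if j = i then 1 else 0) y) \<in> polys_upto 1" for i
    by (rule polys_term) simp
  have me: "monomial (\<lambda>j. if j = i then 1 else 0) y = y $ i" for i and y :: "real^'n"
  proof -
    have "monomial (\<lambda>j. if j = i then 1 else 0) y = (\<Prod>j\<in>UNIV. if j = i then y $ j else 1)"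
      unfolding monomial_def by (intro prod.cong) auto
    also have "\<dots> = y $ i" by simp
    finally show ?thesis .
  qed
  have "(\<lambda>y. \<Sum>i\<in>UNIV. x $ i * monomial (\<lambda>j. if j = i then 1 else 0) y) = (\<lambda>y. x \<bullet> y)"
    by (intro ext) (simp only: me inner_vec_def inner_real_def)
  moreover have "(\<lambda>y. \<Sum>i\<in>UNIV. x $ i * monomial (\<lambda>j. if j = i then 1 else 0) y) \<in> polys_upto 1"
    using coord by (intro polys_sum) auto
  ultimately show ?thesis by simp
qed

lemma polys_pow: "(\<lambda>y. (x \<bullet> y) ^ k) \<in> polys_upto k"
proof (induction k)
  case 0 then show ?case using polys_const[of 1 0] by simp
next
  case (Suc k)
  then show ?case using polys_mul[OF polys_inner[of x] Suc.IH] by simp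
qed

lemma polys_poly_inner:
  assumes "degree r \<le> n"
  shows "(\<lambda>y. poly r (x \<bullet> y)) \<in> polys_upto n"
proof -
  have "(\<lambda>y. \<Sum>k\<le>degree r. coeff r k * (x \<bullet> y) ^ k) \<in> polys_upto n"
  proof (intro polys_sum ballI)
    fix k assume "k \<in> {..degree r}"
    then have "k \<le> n" using assms by simp
    have "(\<lambda>y. (x \<bullet> y) ^ k * coeff r k) \<in> polys_upto (k + 0)"
      by (rule polys_mul[OF polys_pow polys_const])
    then show "(\<lambda>y. coeff r k * (x \<bullet> y) ^ k) \<in> polys_upto n"
      using polys_mono[OF \<open>k \<le> n\<close>] by (simp add: mult.commute)
  qed simp
  then show ?thesis by (simp add: poly_altdef)
qed


typedef ('n::finite) idx = "{..<CARD('n)}"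
  by (rule exI[of _ 0]) simp

instance idx :: (finite) finite
proof
  have "(UNIV :: 'a idx set) \<subseteq> Abs_idx ` {..<CARD('a)}"
    by (metis Rep_idx Rep_idx_inverse image_eqI subsetI)
  then show "finite (UNIV :: 'a idx set)" by (metis finite_imageI finite_lessThan finite_subset)
qed

instantiation idx :: (finite) linorder
begin
definition less_eq_idx :: "'a idx \<Rightarrow> 'a idx \<Rightarrow> bool" where "less_eq_idx x y \<longleftrightarrow> Rep_idx x \<le> Rep_idx y"
definition less_idx :: "'a idx \<Rightarrow> 'a idx \<Rightarrow> bool" where "less_idx x y \<longleftrightarrow> Rep_idx x < Rep_idx y"
instance
  by standard (auto simp: less_eq_idx_def less_idx_def Rep_idx_inject[symmetric])
end

instance idx :: (finite) wellorder
proof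
  fix P :: "'a idx \<Rightarrow> bool" and a
  assume H: "\<And>x. (\<And>y. y < x \<Longrightarrow> P y) \<Longrightarrow> P x"
  show "P a"
    by (induction a rule: measure_induct_rule[where f=Rep_idx]) (rule H, simp add: less_idx_def)
qed

lemma card_idx: "CARD('n idx) = CARD('n::finite)"
  using type_definition.card[OF type_definition_idx] by simp

definition eb :: "'n::finite \<Rightarrow> 'n idx" where "eb = (SOME h. bij h)"

lemma bij_eb: "bij (eb :: 'n::finite \<Rightarrow> 'n idx)"
proof -
  have "\<exists>h :: 'n \<Rightarrow> 'n idx. bij_betw h UNIV UNIV"
    by (rule finite_same_card_bij) (auto simp: card_idx)
  then show ?thesis unfolding eb_def by (metis someI_ex)
qed

definition Phi :: "real^'n::finite \<Rightarrow> real^('n idx)" where "Phi x = (\<chi> j. x $ (inv eb j))"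
definition Psi :: "real^('n::finite idx) \<Rightarrow> real^'n" where "Psi y = (\<chi> i. y $ (eb i))"

lemma eb_inv1: "eb (inv eb j) = j"
  by (metis bij_eb bij_inv_eq_iff)

lemma eb_inv2: "inv eb (eb i) = i"
  by (metis bij_eb bij_inv_eq_iff)

lemma Phi_Psi: "Phi (Psi y) = y"
  by (simp add: Phi_def Psi_def vec_eq_iff eb_inv1)

lemma Psi_Phi: "Psi (Phi x) = x"
  by (simp add: Phi_def Psi_def vec_eq_iff eb_inv2)

lemma Psi_nth: "Psi y $ i = y $ eb i" by (simp add: Psi_def)

lemma linear_Psi: "linear Psi"
  by (intro linearI) (simp_all add: Psi_def vec_eq_iff)

lemma linear_Phi: "linear Phi"
  by (intro linearI) (simp_all add: Phi_def vec_eq_iff)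

lemma inner_Psi: "Psi x \<bullet> Psi y = x \<bullet> y"
proof -
  have "Psi x \<bullet> Psi y = (\<Sum>i\<in>UNIV. x $ eb i * y $ eb i)" by (simp add: inner_vec_def Psi_def)
  also have "\<dots> = (\<Sum>j\<in>UNIV. x $ j * y $ j)"
    using sum.reindex_bij_betw[OF bij_eb, of "\<lambda>j. x $ j * y $ j"] by simp
  also have "\<dots> = x \<bullet> y" by (simp add: inner_vec_def)
  finally show ?thesis .
qed

lemma norm_Psi: "norm (Psi x) = norm x"
  using inner_Psi[of x x] by (simp add: norm_eq_sqrt_inner)

lemma inner_Phi: "Phi x \<bullet> Phi y = x \<bullet> y"
  using inner_Psi[of "Phi x" "Phi y"] by (simp add: Psi_Phi)

lemma norm_Phi: "norm (Phi x) = norm x"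
  using norm_Psi[of "Phi x"] by (simp add: Psi_Phi)

lemma Psi_cbox: "Psi ` cbox u v = cbox (Psi u) (Psi v)"
proof
  show "Psi ` cbox u v \<subseteq> cbox (Psi u) (Psi v)"
    by (auto simp: mem_box_cart Psi_nth)
  show "cbox (Psi u) (Psi v) \<subseteq> Psi ` cbox u v"
  proof
    fix x assume x: "x \<in> cbox (Psi u) (Psi v)"
    have "Phi x \<in> cbox u v"
    proof -
      have "u $ j \<le> Phi x $ j \<and> Phi x $ j \<le> v $ j" for j
        using x[unfolded mem_box_cart, rule_format, of "inv eb j"]
        by (simp add: Psi_nth Phi_def eb_inv1)
      then show ?thesis by (simp add: mem_box_cart)
    qed
    then show "x \<in> Psi ` cbox u v" using Psi_Phi[of x] by force
  qed
qed

lemma Phi_cbox: "Phi ` cbox u v = cbox (Phi u) (Phi v)"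
proof -
  have "Phi ` cbox u v = Phi ` Psi ` cbox (Phi u) (Phi v)"
    by (simp add: Psi_cbox Psi_Phi)
  also have "\<dots> = cbox (Phi u) (Phi v)" by (simp add: image_comp o_def Phi_Psi)
  finally show ?thesis .
qed

lemma content_Psi: "Henstock_Kurzweil_Integration.content (Psi ` cbox u v) = Henstock_Kurzweil_Integration.content (cbox u v)"
proof (cases "cbox u v = {}")
  case True then show ?thesis by simp
next
  case False
  then have ne: "cbox (Psi u) (Psi v) \<noteq> {}" by (simp add: Psi_cbox[symmetric])
  have "Henstock_Kurzweil_Integration.content (Psi ` cbox u v) = (\<Prod>i\<in>UNIV. v $ eb i - u $ eb i)"
    using ne by (simp add: Psi_cbox content_cbox_cart Psi_nth)
  also have "\<dots> = (\<Prod>j\<in>UNIV. v $ j - u $ j)"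
    using prod.reindex_bij_betw[OF bij_eb, of "\<lambda>j. v $ j - u $ j"] by simp
  also have "\<dots> = Henstock_Kurzweil_Integration.content (cbox u v)" using False by (simp add: content_cbox_cart)
  finally show ?thesis .
qed

lemma cball_Psi: "Psi y \<in> cball 0 1 \<longleftrightarrow> y \<in> cball 0 1"
  by (simp add: norm_Psi)

lemma cball_sub_cbox: "cball (0::real^'m::finite) 1 \<subseteq> cbox (- 1) 1"
proof
  fix x :: "real^'m" assume "x \<in> cball 0 1"
  then have "norm x \<le> 1" by simp
  then have "\<bar>x $ i\<bar> \<le> 1" for i using component_le_norm_cart[of x i] by linarith
  then show "x \<in> cbox (- 1) 1" by (auto simp: mem_box_cart abs_le_iff)
qed

lemma Phi_one: "Phi (1::real^'n::finite) = 1" "Phi (- 1 :: real^'n::finite) = - 1"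
  by (simp_all add: Phi_def vec_eq_iff)

lemma transfer_has_integral:
  fixes F :: "real^'n::finite \<Rightarrow> real"
  assumes "(F has_integral i) (cball 0 1)"
  shows "((\<lambda>y. F (Psi y)) has_integral i) (cball 0 1)"
proof -
  let ?F0 = "\<lambda>x. if x \<in> cball (0::real^'n) 1 then F x else 0"
  have "(?F0 has_integral i) (cbox (-1) 1)"
    using has_integral_restrict[OF cball_sub_cbox] assms by blast
  then have "((\<lambda>y. ?F0 (Psi y)) has_integral (1/1) *\<^sub>R i) (Phi ` cbox (-1) 1)"
  proof (rule has_integral_twiddle[where g=Psi and h=Phi and r=1, rotated -1])
    show "Phi (Psi x) = x" for x by (rule Phi_Psi)
    show "Psi (Phi x) = x" for x by (rule Psi_Phi)
    show "continuous (at x) Psi" for x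
      by (rule linear_continuous_at, rule linear_conv_bounded_linear[THEN iffD1, OF linear_Psi])
    show "\<exists>w z. Psi ` cbox u v = cbox w z" for u v by (auto simp: Psi_cbox)
    show "\<exists>w z. Phi ` cbox u v = cbox w z" for u v by (auto simp: Phi_cbox)
    show "Henstock_Kurzweil_Integration.content (Psi ` cbox u v) = 1 * Henstock_Kurzweil_Integration.content (cbox u v)" for u v by (simp add: content_Psi)
  qed simp
  then have "((\<lambda>y. if y \<in> cball 0 1 then F (Psi y) else 0) has_integral i) (cbox (-1) 1)"
    by (simp add: Phi_cbox Phi_one cball_Psi norm_Psi)
  then show ?thesis using has_integral_restrict[OF cball_sub_cbox] by blast
qed

lemma sph_class_int:
  fixes p :: "'a::euclidean_space \<Rightarrow> real"
  assumes p: "continuous_on UNIV p"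
  shows "(\<lambda>z. p (z /\<^sub>R norm z)) absolutely_integrable_on cball 0 1"
proof -
  have "compact (p ` cball 0 1)" by (intro compact_continuous_image continuous_on_subset[OF p]) auto
  then obtain B where B: "\<forall>y\<in>p ` cball 0 1. norm y \<le> B" using compact_imp_bounded bounded_iff by metis
  have nb: "norm (p (z /\<^sub>R norm z)) \<le> B" for z
  proof -
    have "norm (z /\<^sub>R norm z) \<le> 1" by (cases "z = 0") auto
    then show ?thesis using B by auto
  qed
  have meas0: "(\<lambda>z. p (z /\<^sub>R norm z)) \<in> borel_measurable borel"
  proof -
    have a1: "(\<lambda>z::'a. z /\<^sub>R norm z) \<in> borel_measurable borel" by measurable
    show ?thesis by (rule borel_measurable_continuous_on[where f=p, OF p a1])
  qed
  then have meas: "(\<lambda>z. p (z /\<^sub>R norm z)) \<in> borel_measurable (lebesgue_on (cball 0 1))"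
    by (simp add: measurable_completion measurable_restrict_space1)
  show ?thesis
  proof (rule measurable_bounded_by_integrable_imp_absolutely_integrable[OF meas])
    show "cball 0 1 \<in> sets lebesgue" by simp
    show "(\<lambda>_. B) integrable_on cball (0::'a) 1" by (intro integrable_on_const) simp
    show "norm (p (x /\<^sub>R norm x)) \<le> B" for x by (rule nb)
  qed
qed

lemma rot_J:
  fixes H :: "real^'m::{finite,wellorder} \<Rightarrow> real" and T :: "real^'m::{finite,wellorder} \<Rightarrow> real^'m::{finite,wellorder}"
  assumes T: "orthogonal_transformation T" and H: "H absolutely_integrable_on cball 0 1"
  shows "integral (cball 0 1) (\<lambda>z. H (T z)) = integral (cball 0 1) H"
proof -
  define H1 where "H1 = (\<lambda>z. (vec (H z) :: real^1))"
  have H1i: "H1 absolutely_integrable_on cball 0 1"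
  proof (rule absolutely_integrable_componentwise_iff[THEN iffD2], rule ballI)
    fix b :: "real^1" assume "b \<in> Basis"
    then obtain i u where "b = axis i u" "u \<in> Basis" by (auto simp: Basis_vec_def)
    then have "b = axis i 1" by simp
    then have "(\<lambda>x. H1 x \<bullet> b) = H" by (simp add: H1_def inner_axis)
    then show "(\<lambda>x. H1 x \<bullet> b) absolutely_integrable_on cball 0 1" using H by simp
  qed
  have lin: "linear T" using T by (rule orthogonal_transformation_linear)
  have img: "T ` cball 0 1 = cball 0 1"
    using image_orthogonal_transformation_cball[OF T, of 0 1] linear_0[OF lin] by simp
  have det: "\<bar>det (matrix T)\<bar> = 1"
    using det_orthogonal_matrix T by (auto simp: orthogonal_transformation_matrix)
  have "integral (T ` cball 0 1) H1 = \<bar>det (matrix T)\<bar> *\<^sub>R integral (cball 0 1) (H1 \<circ> T)"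
    by (rule integral_change_of_variables_linear[OF lin]) (simp add: img H1i)
  then have eq: "integral (cball 0 1) H1 = integral (cball 0 1) (H1 \<circ> T)" using img det by simp
  have "(\<lambda>x. \<bar>det (matrix T)\<bar> *\<^sub>R H1 (T x)) absolutely_integrable_on cball 0 1"
    using absolutely_integrable_change_of_variables_linear[OF lin, where f=H1 and S="cball 0 1"] img H1i by simp
  then have H1Ti: "(H1 \<circ> T) integrable_on cball 0 1" using det by (simp add: o_def absolutely_integrable_on_def)
  have H1int: "H1 integrable_on cball 0 1" using H1i by (simp add: absolutely_integrable_on_def)
  have "integral (cball 0 1) (\<lambda>z. H (T z)) = integral (cball 0 1) (\<lambda>z. (H1 \<circ> T) z $ 1)"
    by (simp add: H1_def)
  also have "\<dots> = integral (cball 0 1) (H1 \<circ> T) $ 1" by (rule integral_component_eq_cart[OF H1Ti])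
  also have "\<dots> = integral (cball 0 1) H1 $ 1" using eq by simp
  also have "\<dots> = integral (cball 0 1) (\<lambda>z. H1 z $ 1)" by (rule integral_component_eq_cart[OF H1int, symmetric])
  also have "\<dots> = integral (cball 0 1) H" by (simp add: H1_def)
  finally show ?thesis .
qed

lemma transfer_integral:
  fixes p :: "real^'n::finite \<Rightarrow> real"
  assumes p: "continuous_on UNIV p"
  shows "integral (cball 0 1) (\<lambda>y. p (Psi y /\<^sub>R norm (Psi y))) = integral (cball 0 1) (\<lambda>z. p (z /\<^sub>R norm z))"
proof -
  have "(\<lambda>z. p (z /\<^sub>R norm z)) integrable_on cball 0 1"
    using sph_class_int[OF p] by (simp add: absolutely_integrable_on_def)
  then have "((\<lambda>z. p (z /\<^sub>R norm z)) has_integral integral (cball 0 1) (\<lambda>z. p (z /\<^sub>R norm z))) (cball 0 1)"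
    by (rule integrable_integral)
  from transfer_has_integral[OF this] show ?thesis by (rule integral_unique)
qed

lemma sph_rot:
  fixes p :: "real^'n::finite \<Rightarrow> real" and T :: "real^'n \<Rightarrow> real^'n"
  assumes p: "continuous_on UNIV p" and T: "orthogonal_transformation T"
  shows "integral (cball 0 1) (\<lambda>z. p (T z /\<^sub>R norm (T z))) = integral (cball 0 1) (\<lambda>z. p (z /\<^sub>R norm z))"
proof -
  have lin: "linear T" using T by (rule orthogonal_transformation_linear)
  have TF: "p (T z /\<^sub>R norm (T z)) = (p \<circ> T) (z /\<^sub>R norm z)" for z
    using linear_cmul[OF lin] orthogonal_transformation_norm[OF T] by simp
  have pT: "continuous_on UNIV (p \<circ> T)"
    by (intro continuous_on_compose linear_continuous_on continuous_on_subset[OF p])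
       (auto simp: lin linear_conv_bounded_linear[symmetric])
  define T' where "T' = (\<lambda>y. Phi (T (Psi y)))"
  have T': "orthogonal_transformation T'"
    unfolding orthogonal_transformation_def
  proof
    show "linear T'" unfolding T'_def
      using linear_compose[OF linear_compose[OF linear_Psi lin] linear_Phi] by (simp add: o_def)
    show "\<forall>v w. T' v \<bullet> T' w = v \<bullet> w"
      using T by (simp add: T'_def inner_Phi inner_Psi orthogonal_transformation_def)
  qed
  have pPsi: "continuous_on UNIV (p \<circ> Psi)"
    by (intro continuous_on_compose linear_continuous_on continuous_on_subset[OF p])
       (auto simp: linear_Psi linear_conv_bounded_linear[symmetric])
  define H where "H = (\<lambda>y. p (Psi y /\<^sub>R norm (Psi y)))"
  have Heq: "H = (\<lambda>y. (p \<circ> Psi) (y /\<^sub>R norm y))"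
  proof (rule ext)
    fix y :: "real^('n idx)"
    have "Psi (inverse (norm y) *\<^sub>R y) = inverse (norm y) *\<^sub>R Psi y"
      by (rule linear_cmul[OF linear_Psi])
    then show "H y = (p \<circ> Psi) (y /\<^sub>R norm y)" by (simp add: H_def norm_Psi)
  qed
  have Hi: "H absolutely_integrable_on cball 0 1" using sph_class_int[OF pPsi] Heq by simp
  have HT: "H (T' y) = (p \<circ> T) (Psi y /\<^sub>R norm (Psi y))" for y
    by (simp add: H_def T'_def Psi_Phi TF)
  have "integral (cball 0 1) (\<lambda>z. p (T z /\<^sub>R norm (T z))) = integral (cball 0 1) (\<lambda>z. (p \<circ> T) (z /\<^sub>R norm z))"
    using TF by simp
  also have "\<dots> = integral (cball 0 1) (\<lambda>y. (p \<circ> T) (Psi y /\<^sub>R norm (Psi y)))"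
    by (rule transfer_integral[OF pT, symmetric])
  also have "\<dots> = integral (cball 0 1) (\<lambda>y. H (T' y))" using HT by simp
  also have "\<dots> = integral (cball 0 1) H" by (rule rot_J[OF T' Hi])
  also have "\<dots> = integral (cball 0 1) (\<lambda>z. p (z /\<^sub>R norm z))"
    unfolding H_def by (rule transfer_integral[OF p])
  finally show ?thesis .
qed


lemma cont_poly_inner: "continuous_on UNIV (\<lambda>w. poly r (x \<bullet> (w::'a::real_inner)))"
proof (intro continuous_at_imp_continuous_on ballI)
  fix w :: 'a
  have "isCont (\<lambda>w. x \<bullet> w) w" by (intro continuous_intros)
  moreover have "isCont (poly r) (x \<bullet> w)" by (rule DERIV_isCont[OF poly_DERIV])
  ultimately show "isCont (\<lambda>w. poly r (x \<bullet> w)) w" by (rule isCont_o2)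
qed

lemma avg_inv:
  fixes x x' :: "real^'n::finite" and r :: "real poly"
  assumes "norm x = 1" "norm x' = 1"
  shows "sphere_avg (\<lambda>y. poly r (x \<bullet> y)) = sphere_avg (\<lambda>y. poly r (x' \<bullet> y))"
proof -
  obtain T where T: "orthogonal_transformation T" "T x' = x"
    using orthogonal_transformation_exists[of x' x] assms by auto
  have lin: "linear T" using T by (simp add: orthogonal_transformation_linear)
  have eq: "poly r (x \<bullet> (T z /\<^sub>R norm (T z))) = poly r (x' \<bullet> (z /\<^sub>R norm z))" for z
  proof -
    have "T z /\<^sub>R norm (T z) = T (z /\<^sub>R norm z)"
      using linear_cmul[OF lin, of "inverse (norm z)" z] orthogonal_transformation_norm[OF T(1)] by simp
    then have "x \<bullet> (T z /\<^sub>R norm (T z)) = T x' \<bullet> T (z /\<^sub>R norm z)" using T(2) by simp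
    also have "\<dots> = x' \<bullet> (z /\<^sub>R norm z)" using T(1) by (simp add: orthogonal_transformation_def)
    finally show ?thesis by simp
  qed
  have "integral (cball 0 1) (\<lambda>z. poly r (x \<bullet> (T z /\<^sub>R norm (T z)))) =
        integral (cball 0 1) (\<lambda>z. poly r (x \<bullet> (z /\<^sub>R norm z)))"
    by (rule sph_rot[OF cont_poly_inner T(1)])
  then show ?thesis using eq by (simp add: sphere_avg_def)
qed

lemma design_inv:
  fixes x x' :: "real^'n::finite" and r :: "real poly"
  assumes D: "spherical_design n \<omega>" and r: "degree r \<le> n" and x: "norm x = 1" "norm x' = 1"
  shows "(\<Sum>y\<in>\<omega>. poly r (x \<bullet> y)) = (\<Sum>y\<in>\<omega>. poly r (x' \<bullet> y))"
proof -
  have fin: "finite \<omega>" "\<omega> \<noteq> {}" using D by (auto simp: spherical_design_def)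
  then have c: "real (card \<omega>) \<noteq> 0" by simp
  have e1: "(\<Sum>y\<in>\<omega>. poly r (x \<bullet> y)) / real (card \<omega>) = sphere_avg (\<lambda>y. poly r (x \<bullet> y))"
    using D polys_poly_inner[OF r, of x] by (auto simp: spherical_design_def)
  have e2: "(\<Sum>y\<in>\<omega>. poly r (x' \<bullet> y)) / real (card \<omega>) = sphere_avg (\<lambda>y. poly r (x' \<bullet> y))"
    using D polys_poly_inner[OF r, of x'] by (auto simp: spherical_design_def)
  have "(\<Sum>y\<in>\<omega>. poly r (x \<bullet> y)) / real (card \<omega>) = (\<Sum>y\<in>\<omega>. poly r (x' \<bullet> y)) / real (card \<omega>)"
    using e1 e2 avg_inv[OF x, of r] by metis
  then show ?thesis using c by (simp add: divide_cancel_right)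
qed

lemma unit_dist_sq:
  fixes x y :: "real^'n::finite"
  assumes "norm x = 1" "norm y = 1"
  shows "(norm (x - y))^2 = 2 - 2 * (x \<bullet> y)"
proof -
  have "x \<bullet> x = 1" "y \<bullet> y = 1" using assms by (simp_all add: dot_square_norm)
  then show ?thesis by (simp add: power2_norm_eq_inner inner_diff_left inner_diff_right inner_commute)
qed

lemma unit_inner_bounds:
  fixes x y :: "real^'n::finite"
  assumes "norm x = 1" "norm y = 1"
  shows "-1 \<le> x \<bullet> y" "x \<bullet> y \<le> 1"
  using Cauchy_Schwarz_ineq2[of x y] assms by auto

lemma unit_inner_one:
  fixes x y :: "real^'n::finite"
  assumes "norm x = 1" "norm y = 1" "x \<bullet> y = 1"
  shows "x = y"
  using unit_dist_sq[OF assms(1,2)] assms(3) by simp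

lemma unit_inner_mone:
  fixes x y :: "real^'n::finite"
  assumes "norm x = 1" "norm y = 1" "x \<bullet> y = -1"
  shows "y = - x"
proof -
  have "norm (- x) = 1" using assms by simp
  from unit_inner_one[OF this assms(2)] assms(3) show ?thesis by simp
qed


theorem theorem2p4:
  fixes f :: "real \<Rightarrow> real" and m :: nat and \<omega> :: "(real^'n::finite) set"
  assumes "m \<ge> 1" and "CARD('n) \<ge> 2"
    and "continuous_on {0..4} f"
    and "\<forall>t\<in>{0<..<4}. f differentiable (at t)"
    and "\<forall>j<2*m-2. \<forall>t\<in>{0<..<4}. ((deriv ^^ j) f) differentiable (at t)"
    and "convex_on {0<..<4} ((deriv ^^ (2*m-2)) f)"
    and "sharp_config m \<omega>" and "antipodal \<omega>"
  shows "(\<forall>y\<in>\<omega>. \<forall>x\<in>sphere 0 1. potential f \<omega> x \<le> potential f \<omega> y)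
       \<and> (strict_convex_on {0<..<4} ((deriv ^^ (2*m-2)) f) \<longrightarrow>
          (\<forall>x\<in>sphere 0 1. (\<forall>z\<in>sphere 0 1. potential f \<omega> z \<le> potential f \<omega> x) \<longrightarrow> x \<in> \<omega>))"
proof -
  note m1 = assms(1) and cont = assms(3) and d0 = assms(4) and dj = assms(5) and cv = assms(6)
  have D: "spherical_design (2*m-1) \<omega>" and cT: "card {x \<bullet> y | x y. x \<in> \<omega> \<and> y \<in> \<omega> \<and> x \<noteq> y} = m"
    using assms(7) by (auto simp: sharp_config_def)
  have antip: "\<And>x. x \<in> \<omega> \<Longrightarrow> - x \<in> \<omega>" using assms(8) by (auto simp: antipodal_def)
  have fin: "finite \<omega>" and ne: "\<omega> \<noteq> {}" and sph: "\<And>x. x \<in> \<omega> \<Longrightarrow> norm x = 1"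
    using D by (auto simp: spherical_design_def)
  define T where "T = {x \<bullet> y | x y. x \<in> \<omega> \<and> y \<in> \<omega> \<and> x \<noteq> y}"
  have Tc: "card T = m" using cT T_def by simp
  have Tf: "finite T" using Tc m1 by (metis card.infinite not_one_le_zero)
  obtain x0 where x0: "x0 \<in> \<omega>" using ne by auto
  have m1T: "-1 \<in> T"
  proof -
    have "norm (x0 + x0) = 2" using sph[OF x0] by (simp add: scaleR_2[symmetric])
    then have "x0 \<noteq> - x0" by (metis add.right_inverse norm_zero zero_neq_numeral)
    moreover have "x0 \<bullet> (- x0) = -1" using sph[OF x0] by (simp add: dot_square_norm)
    ultimately show ?thesis unfolding T_def using x0 antip[OF x0] by force
  qed
  have Tb: "t \<in> {-1..<1}" if tT: "t \<in> T" for t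
  proof -
    obtain x y where xy: "t = x \<bullet> y" "x \<in> \<omega>" "y \<in> \<omega>" "x \<noteq> y" using tT T_def by auto
    have "t \<noteq> 1" using unit_inner_one[OF sph[OF xy(2)] sph[OF xy(3)]] xy by auto
    then show ?thesis using unit_inner_bounds[OF sph[OF xy(2)] sph[OF xy(3)]] xy by auto
  qed
  define T' where "T' = T - {-1}"
  have T'f: "finite T'" using Tf T'_def by simp
  have T'c: "card T' = m - 1" using Tc m1T Tf T'_def by simp
  have T'b: "t \<in> {-1<..<1}" if "t \<in> T'" for t using Tb[of t] that T'_def by auto
  define U where "U = (\<lambda>t. 2 - 2 * t) ` T'"
  have Uf: "finite U" using T'f U_def by simp
  have Uc: "card U = m - 1"
  proof -
    have "inj_on (\<lambda>t::real. 2 - 2 * t) T'" by (intro inj_onI) simp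
    then show ?thesis using T'c by (simp add: U_def card_image)
  qed
  have Us: "U \<subseteq> {0<..<4}"
  proof
    fix u assume "u \<in> U"
    then obtain t where t: "t \<in> T'" "u = 2 - 2 * t" by (auto simp: U_def)
    then show "u \<in> {0<..<4}" using T'b[OF t(1)] by auto
  qed
  obtain Q where Qd: "degree Q \<le> 2*m-1" and QN: "\<forall>v\<in>insert 0 (insert 4 U). poly Q v = f v"
      and Qge: "\<forall>s\<in>{0..4}. f s \<le> poly Q s"
      and Qst: "strict_convex_on {0<..<4} ((deriv ^^ (2*m-2)) f) \<longrightarrow>
          (\<forall>s\<in>{0..4} - insert 0 (insert 4 U). f s < poly Q s)"
    using hermite_main[OF m1 cont d0 dj cv Uf Us Uc] by blast
  define R where "R = Q \<circ>\<^sub>p [:2, -2:]"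
  have Rd: "degree R \<le> 2*m-1" using Qd by (simp add: R_def degree_pcompose)
  have R_ev: "poly R t = poly Q (2 - 2 * t)" for t by (simp add: R_def poly_pcompose algebra_simps)
  have dsq: "(norm (x - y))^2 = 2 - 2 * (x \<bullet> y)" if "norm x = 1" "y \<in> \<omega>" for x y
    using unit_dist_sq[OF that(1) sph[OF that(2)]] .
  have drange: "(norm (x - y))^2 \<in> {0..4}" if "norm x = 1" "y \<in> \<omega>" for x y
    using dsq[OF that] unit_inner_bounds[OF that(1) sph[OF that(2)]] by auto
  have nodes: "(norm (z - y))^2 \<in> insert 0 (insert 4 U)" if "z \<in> \<omega>" "y \<in> \<omega>" for z y
  proof (cases "z = y")
    case True then show ?thesis by simp
  next
    case False
    have zyT: "z \<bullet> y \<in> T" using that False T_def by auto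
    show ?thesis
    proof (cases "z \<bullet> y = -1")
      case True
      then show ?thesis using dsq[OF sph[OF that(1)] that(2)] by simp
    next
      case False
      then have "z \<bullet> y \<in> T'" using zyT T'_def by simp
      then show ?thesis using dsq[OF sph[OF that(1)] that(2)] by (simp add: U_def)
    qed
  qed
  define PhiS where "PhiS = (\<lambda>x. \<Sum>y\<in>\<omega>. poly R (x \<bullet> y))"
  have pot_le: "potential f \<omega> x \<le> PhiS x" if "norm x = 1" for x
  proof -
    have "potential f \<omega> x = (\<Sum>y\<in>\<omega>. f ((norm (x - y))^2))" by (simp add: potential_def)
    also have "\<dots> \<le> (\<Sum>y\<in>\<omega>. poly Q ((norm (x - y))^2))"
      using Qge drange[OF that] by (intro sum_mono) auto
    also have "\<dots> = PhiS x" using dsq[OF that] by (simp add: PhiS_def R_ev)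
    finally show ?thesis .
  qed
  have pot_eq: "potential f \<omega> z = PhiS z" if "z \<in> \<omega>" for z
  proof -
    have "potential f \<omega> z = (\<Sum>y\<in>\<omega>. f ((norm (z - y))^2))" by (simp add: potential_def)
    also have "\<dots> = (\<Sum>y\<in>\<omega>. poly Q ((norm (z - y))^2))"
    proof (intro sum.cong refl)
      fix y assume "y \<in> \<omega>"
      then have "(norm (z - y))^2 \<in> insert 0 (insert 4 U)" by (rule nodes[OF that])
      then show "f ((norm (z - y))^2) = poly Q ((norm (z - y))^2)" using QN by metis
    qed
    also have "\<dots> = PhiS z" using dsq[OF sph[OF that]] by (simp add: PhiS_def R_ev)
    finally show ?thesis .
  qed
  have Phi_eq: "PhiS x = PhiS x'" if "norm x = 1" "norm x' = 1" for x x'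
    unfolding PhiS_def by (rule design_inv[OF D Rd that])
  have part1: "\<forall>y\<in>\<omega>. \<forall>x\<in>sphere 0 1. potential f \<omega> x \<le> potential f \<omega> y"
  proof (intro ballI)
    fix y x assume y: "y \<in> \<omega>" and x: "x \<in> sphere (0::real^'n) 1"
    have nx: "norm x = 1" using x by simp
    have "potential f \<omega> x \<le> PhiS x" by (rule pot_le[OF nx])
    also have "\<dots> = PhiS y" by (rule Phi_eq[OF nx sph[OF y]])
    also have "\<dots> = potential f \<omega> y" by (rule pot_eq[OF y, symmetric])
    finally show "potential f \<omega> x \<le> potential f \<omega> y" .
  qed
  have part2: "x \<in> \<omega>" if sc: "strict_convex_on {0<..<4} ((deriv ^^ (2*m-2)) f)"
    and x: "x \<in> sphere 0 1" and mx: "\<forall>z\<in>sphere 0 1. potential f \<omega> z \<le> potential f \<omega> x" for x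
  proof (rule ccontr)
    assume xn: "x \<notin> \<omega>"
    have nx: "norm x = 1" using x by simp
    have "potential f \<omega> x0 \<le> potential f \<omega> x" using mx sph[OF x0] by simp
    moreover have "potential f \<omega> x0 = PhiS x" using pot_eq[OF x0] Phi_eq[OF sph[OF x0] nx] by simp
    ultimately have "PhiS x \<le> potential f \<omega> x" by simp
    then have "(\<Sum>y\<in>\<omega>. poly Q ((norm (x - y))^2) - f ((norm (x - y))^2)) \<le> 0"
      using dsq[OF nx] by (simp add: PhiS_def R_ev potential_def sum_subtractf)
    moreover have nn: "\<forall>y\<in>\<omega>. poly Q ((norm (x - y))^2) - f ((norm (x - y))^2) \<ge> 0"
      using Qge drange[OF nx] by auto
    ultimately have "(\<Sum>y\<in>\<omega>. poly Q ((norm (x - y))^2) - f ((norm (x - y))^2)) = 0"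
      by (meson antisym sum_nonneg)
    moreover have "(\<Sum>y\<in>\<omega>. poly Q ((norm (x - y))^2) - f ((norm (x - y))^2)) = 0 \<longleftrightarrow>
        (\<forall>y\<in>\<omega>. poly Q ((norm (x - y))^2) - f ((norm (x - y))^2) = 0)"
      by (rule sum_nonneg_eq_0_iff[OF fin]) (use nn in auto)
    ultimately have z: "\<forall>y\<in>\<omega>. poly Q ((norm (x - y))^2) - f ((norm (x - y))^2) = 0"
      by simp
    have inN: "(norm (x - y))^2 \<in> insert 0 (insert 4 U)" if "y \<in> \<omega>" for y
    proof (rule ccontr)
      assume "(norm (x - y))^2 \<notin> insert 0 (insert 4 U)"
      then have "f ((norm (x - y))^2) < poly Q ((norm (x - y))^2)"
        using Qst sc drange[OF nx that] by auto
      then show False using z that by auto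
    qed
    have inT': "x \<bullet> y \<in> T'" if y: "y \<in> \<omega>" for y
    proof -
      have "(norm (x - y))^2 \<noteq> 0"
      proof
        assume "(norm (x - y))^2 = 0"
        then have "x = y" by simp
        then show False using xn y by simp
      qed
      moreover have "(norm (x - y))^2 \<noteq> 4"
      proof
        assume "(norm (x - y))^2 = 4"
        then have "x \<bullet> y = -1" using dsq[OF nx y] by simp
        then have "x = - y" using unit_inner_mone[OF sph[OF y] nx] by (simp add: inner_commute)
        then show False using xn antip[OF y] by simp
      qed
      ultimately have "(norm (x - y))^2 \<in> U" using inN[OF y] by simp
      then obtain t where t: "t \<in> T'" "(norm (x - y))^2 = 2 - 2 * t" by (auto simp: U_def)
      then have "x \<bullet> y = t" using dsq[OF nx y] by simp
      then show ?thesis using t by simp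
    qed
    define h where "h = pp T' * pp T'"
    have hd: "degree h \<le> 2*m-1"
    proof -
      have "degree h \<le> degree (pp T') + degree (pp T')" unfolding h_def by (rule degree_mult_le)
      also have "\<dots> = 2 * (m - 1)" using degree_pp[OF T'f] T'c by simp
      finally show ?thesis by simp
    qed
    have hev: "poly h t = (\<Prod>a\<in>T'. t - a) * (\<Prod>a\<in>T'. t - a)" for t by (simp add: h_def poly_pp)
    have "(\<Sum>y\<in>\<omega>. poly h (x \<bullet> y)) = 0"
      using inT' T'f by (intro sum.neutral) (auto simp: hev prod_zero_iff)
    moreover have "(\<Sum>y\<in>\<omega>. poly h (x0 \<bullet> y)) > 0"
    proof -
      have "poly h (x0 \<bullet> x0) > 0"
      proof -
        have "x0 \<bullet> x0 = 1" using sph[OF x0] by (simp add: dot_square_norm)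
        moreover have pn: "(\<Prod>a\<in>T'. 1 - a) \<noteq> 0" using T'b T'f by (auto simp: prod_zero_iff)
        moreover have "(\<Prod>a\<in>T'. 1 - a) * (\<Prod>a\<in>T'. 1 - a) > 0"
          using pn not_real_square_gt_zero by blast
        ultimately show ?thesis by (simp add: hev)
      qed
      moreover have "poly h (x0 \<bullet> x0) \<le> (\<Sum>y\<in>\<omega>. poly h (x0 \<bullet> y))"
        using fin x0 by (intro member_le_sum) (auto simp: hev)
      ultimately show ?thesis by simp
    qed
    moreover have "(\<Sum>y\<in>\<omega>. poly h (x \<bullet> y)) = (\<Sum>y\<in>\<omega>. poly h (x0 \<bullet> y))"
      by (rule design_inv[OF D hd nx sph[OF x0]])
    ultimately show False by simp
  qed
  show ?thesis using part1 part2 by blast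
qed


end
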